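(* Let $0\to M\xrightarrow{i}\Lambda\xrightarrow{d}B\to0$ be an exact sequence of lattices, $P\subset\Lambda_\mathbb{Q}$ a polyhedron, and $F\subset P$ an $M$-stable face. Then the map $i^*:\Lambda^\vee_\mathbb{Q}\to M^\vee_\mathbb{Q}$ restricts to a bijection $i^*_F:N_FP\to N_{F_M}P_M$.
   Context: Notation: $P_M=P\cap M_\mathbb{Q}$, $F_M=F\cap M_\mathbb{Q}$ (identifying $M$ with $i(M)$). For $y\in\Lambda^\vee_\mathbb{Q}$, $\mathrm{face}_y(P)=\{x\in P:\langle x,y\rangle=\min_P\langle-,y\rangle\}$; faces are the nonempty sets of this form; $N_FP=\{y\in\Lambda^\vee_\mathbb{Q}:\mathrm{face}_y(P)\supset F\}$, and analogously $N_{F_M}P_M\subset M^\vee_\mathbb{Q}$ for the face $F_M$ of $P_M$. $\langle F\rangle$ is the span of the differences of elements of $F$; $F$ is $M$-stable if the relative interior of $F$ meets $M_\mathbb{Q}$ and $\langle F\rangle+M_\mathbb{Q}=\Lambda_\mathbb{Q}$. *)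

theory Defs
  imports "HOL-Analysis.Analysis"
begin

text \<open>Rational vector spaces are modelled as rat ^ 'a with 'a a finite index type.
  The pairing between a rational vector space and its dual is the standard one.\<close>

definition pairQ :: "rat ^ 'a \<Rightarrow> rat ^ 'a \<Rightarrow> rat" where
  "pairQ x y = (\<Sum>i\<in>UNIV. x $ i * y $ i)"

definition polyhedronQ :: "(rat ^ 'a) set \<Rightarrow> bool" where
  "polyhedronQ P \<longleftrightarrow> (\<exists>H :: ((rat ^ 'a) \<times> rat) set. finite H \<and>
      P = {x. \<forall>(a, b)\<in>H. pairQ a x \<ge> b})"

definition faceQ :: "rat ^ 'a \<Rightarrow> (rat ^ 'a) set \<Rightarrow> (rat ^ 'a) set" where
  "faceQ y P = {x \<in> P. \<forall>z\<in>P. pairQ x y \<le> pairQ z y}"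

definition is_faceQ :: "(rat ^ 'a) set \<Rightarrow> (rat ^ 'a) set \<Rightarrow> bool" where
  "is_faceQ F P \<longleftrightarrow> F \<noteq> {} \<and> (\<exists>y. F = faceQ y P)"

definition normal_coneQ :: "(rat ^ 'a) set \<Rightarrow> (rat ^ 'a) set \<Rightarrow> (rat ^ 'a) set" where
  "normal_coneQ F P = {y. F \<subseteq> faceQ y P}"

definition spanQ :: "(rat ^ 'a) set \<Rightarrow> (rat ^ 'a) set" where
  "spanQ S = {x. \<exists>T c. finite T \<and> T \<subseteq> S \<and> x = (\<Sum>v\<in>T. c v *s v)}"

definition aff_hullQ :: "(rat ^ 'a) set \<Rightarrow> (rat ^ 'a) set" where
  "aff_hullQ S = {x. \<exists>T c. finite T \<and> T \<subseteq> S \<and> sum c T = 1 \<and> x = (\<Sum>v\<in>T. c v *s v)}"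

definition rel_interiorQ :: "(rat ^ 'a) set \<Rightarrow> (rat ^ 'a) set" where
  "rel_interiorQ S = {x \<in> S. \<exists>e>0. \<forall>z\<in>aff_hullQ S. (\<forall>i. \<bar>z $ i - x $ i\<bar> < e) \<longrightarrow> z \<in> S}"

definition dir_spanQ :: "(rat ^ 'a) set \<Rightarrow> (rat ^ 'a) set" where
  "dir_spanQ F = spanQ {x - y | x y. x \<in> F \<and> y \<in> F}"

definition ratmat :: "int ^ 'm ^ 'n \<Rightarrow> rat ^ 'm ^ 'n" where
  "ratmat A = (\<chi> r c. of_int (A $ r $ c))"

definition M_stable :: "int ^ 'm ^ 'n \<Rightarrow> (rat ^ 'n) set \<Rightarrow> bool" where
  "M_stable A F \<longleftrightarrow>
     rel_interiorQ F \<inter> range (\<lambda>m. ratmat A *v m) \<noteq> {} \<and>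
     (\<forall>v. \<exists>a\<in>dir_spanQ F. \<exists>m. v = a + ratmat A *v m)"

end

theory Submission
  imports Defs
begin

lemma pairQ_add_left: "pairQ (x + y) z = pairQ x z + pairQ y z"
  by (simp add: pairQ_def sum.distrib distrib_right)
lemma pairQ_diff_left: "pairQ (x - y) z = pairQ x z - pairQ y z"
  by (simp add: pairQ_def sum_subtractf left_diff_distrib)
lemma pairQ_scale_left: "pairQ (c *s x) z = c * pairQ x z"
  by (simp add: pairQ_def sum_distrib_left mult.assoc)
lemma pairQ_add_right: "pairQ z (x + y) = pairQ z x + pairQ z y"
  by (simp add: pairQ_def sum.distrib distrib_left)
lemma pairQ_diff_right: "pairQ z (x - y) = pairQ z x - pairQ z y"
  by (simp add: pairQ_def sum_subtractf right_diff_distrib)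
lemma pairQ_scale_right: "pairQ z (c *s x) = c * pairQ z x"
  by (simp add: pairQ_def sum_distrib_left mult_ac)
lemma pairQ_zero_left[simp]: "pairQ 0 z = 0"
  by (simp add: pairQ_def)
lemma pairQ_axis: "pairQ (axis j 1) w = w $ j"
proof -
  have e: "(\<lambda>i. axis j 1 $ i * w $ i) = (\<lambda>i. if i = j then w $ i else 0)"
    by (auto simp: axis_def)
  show ?thesis unfolding pairQ_def e by simp
qed

lemma pairQ_self_zero: "pairQ w w = 0 \<Longrightarrow> w = 0"
  unfolding pairQ_def
  by (subst (asm) sum_nonneg_eq_0_iff) (auto simp: vec_eq_iff)

lemma pairQ_transpose:
  "pairQ m (transpose B *v y) = pairQ (B *v m) y"
proof -
  have "pairQ m (transpose B *v y) = (\<Sum>j\<in>UNIV. \<Sum>i\<in>UNIV. m$j * (B$i$j * y$i))"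
    unfolding pairQ_def by (simp add: matrix_vector_mult_def transpose_def sum_distrib_left)
  also have "\<dots> = (\<Sum>i\<in>UNIV. \<Sum>j\<in>UNIV. m$j * (B$i$j * y$i))"
    by (rule sum.swap)
  also have "\<dots> = pairQ (B *v m) y"
    unfolding pairQ_def by (simp add: matrix_vector_mult_def sum_distrib_right sum_distrib_left mult_ac)
  finally show ?thesis .
qed

lemma spanQ_eq: "spanQ S = vec.span S"
  unfolding spanQ_def vec.span_explicit by auto

lemma dir_span_sub:
  assumes "x0 \<in> F"
  shows "dir_spanQ F \<subseteq> vec.span ((\<lambda>x. x - x0) ` F)"
  unfolding dir_spanQ_def spanQ_eq
proof (rule vec.span_minimal)
  show "{x - y |x y. x \<in> F \<and> y \<in> F} \<subseteq> vec.span ((\<lambda>x. x - x0) ` F)"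
  proof safe
    fix x y assume "x \<in> F" "y \<in> F"
    then have "x - x0 \<in> vec.span ((\<lambda>x. x - x0) ` F)" "y - x0 \<in> vec.span ((\<lambda>x. x - x0) ` F)"
      by (auto intro: vec.span_base)
    from vec.span_diff[OF this] show "x - y \<in> vec.span ((\<lambda>x. x - x0) ` F)" by simp
  qed
qed (rule vec.subspace_span)

lemma AH0:
  assumes "finite T" "T \<subseteq> F" "x0 \<in> F"
  shows "x0 + (\<Sum>x\<in>T. c x *s (x - x0)) \<in> aff_hullQ F"
proof -
  define T1 where "T1 = T - {x0}"
  have fT1: "finite T1" using assms unfolding T1_def by auto
  have eq1: "(\<Sum>x\<in>T. c x *s (x - x0)) = (\<Sum>x\<in>T1. c x *s (x - x0))"
    unfolding T1_def using assms(1) by (intro sum.mono_neutral_right) auto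
  define d where "d = (\<lambda>x. if x = x0 then 1 - sum c T1 else c x)"
  have x0T1: "x0 \<notin> T1" unfolding T1_def by auto
  have s1: "sum d (insert x0 T1) = 1"
    using fT1 x0T1 by (simp add: d_def) (intro sum.cong, auto)
  have s2: "(\<Sum>v\<in>insert x0 T1. d v *s v) = x0 + (\<Sum>x\<in>T1. c x *s (x - x0))"
  proof -
    have a: "(\<Sum>v\<in>T1. d v *s v) = (\<Sum>v\<in>T1. c v *s v)"
      using x0T1 by (intro sum.cong) (auto simp: d_def)
    have "(\<Sum>v\<in>insert x0 T1. d v *s v) = (1 - sum c T1) *s x0 + (\<Sum>v\<in>T1. c v *s v)"
    proof -
      have "d x0 = 1 - sum c T1" by (simp add: d_def)
      then show ?thesis using fT1 x0T1 by (simp add: a)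
    qed
    also have "\<dots> = x0 + (\<Sum>x\<in>T1. c x *s (x - x0))"
      by (simp add: vec_eq_iff algebra_simps sum_subtractf sum_distrib_right sum_distrib_left mult.commute)
    finally show ?thesis .
  qed
  show ?thesis unfolding aff_hullQ_def eq1
    apply (rule CollectI, rule exI[of _ "insert x0 T1"], rule exI[of _ d])
    using s1 s2 fT1 assms unfolding T1_def by auto
qed

lemma AH:
  assumes "x0 \<in> F" "a \<in> dir_spanQ F" shows "x0 + a \<in> aff_hullQ F"
proof -
  from dir_span_sub assms have "a \<in> vec.span ((\<lambda>x. x - x0) ` F)" by blast
  then obtain T r where T: "finite T" "T \<subseteq> (\<lambda>x. x - x0) ` F" "a = (\<Sum>u\<in>T. r u *s u)"
    unfolding vec.span_explicit by blast
  then obtain T' where T': "T' \<subseteq> F" "T = (\<lambda>x. x - x0) ` T'" by (auto simp: subset_image_iff)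
  have inj: "inj_on (\<lambda>x. x - x0) T'" by (auto simp: inj_on_def)
  have fT': "finite T'" using T(1) T'(2) inj finite_imageD by blast
  have "a = (\<Sum>x\<in>T'. r (x - x0) *s (x - x0))" by (simp only: T(3) T'(2) sum.reindex[OF inj] o_def)
  then show ?thesis using AH0[OF fT' T'(1) assms(1)] by simp
qed

lemma R:
  assumes "x0 \<in> rel_interiorQ F" "a \<in> dir_spanQ F"
  shows "\<exists>s>0. x0 + s *s a \<in> F"
proof -
  from assms(1) obtain e where x0F: "x0 \<in> F" and e: "e > 0"
    "\<forall>z\<in>aff_hullQ F. (\<forall>i. \<bar>z$i - x0$i\<bar> < e) \<longrightarrow> z \<in> F"
    unfolding rel_interiorQ_def by blast
  define S where "S = (\<Sum>i\<in>UNIV. \<bar>a$i\<bar>)"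
  have S0: "S \<ge> 0" unfolding S_def by (simp add: sum_nonneg)
  define s where "s = e / (1 + S)"
  have s0: "s > 0" using e S0 by (simp add: s_def)
  have "s *s a \<in> dir_spanQ F" using assms(2) unfolding dir_spanQ_def spanQ_eq by (rule vec.span_scale)
  then have h: "x0 + s *s a \<in> aff_hullQ F" using AH x0F by blast
  have "\<forall>i. \<bar>(x0 + s *s a)$i - x0$i\<bar> < e"
  proof
    fix i
    have ai: "\<bar>a$i\<bar> \<le> S" unfolding S_def by (rule member_le_sum) auto
    have "\<bar>(x0 + s *s a)$i - x0$i\<bar> = s * \<bar>a$i\<bar>" using s0 by (simp add: abs_mult)
    also have "\<dots> \<le> s * S" using ai s0 by simp
    also have "\<dots> < s * (1 + S)" using s0 by simp
    also have "\<dots> = e" using S0 by (simp add: s_def)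
    finally show "\<bar>(x0 + s *s a)$i - x0$i\<bar> < e" .
  qed
  then show ?thesis using e(2) h s0 by blast
qed

lemma conv:
  assumes "polyhedronQ P" "p \<in> P" "x \<in> P" "0 \<le> l" "l \<le> 1"
  shows "(1-l) *s p + l *s x \<in> P"
proof -
  obtain H where H: "P = {x. \<forall>(a,b)\<in>H. pairQ a x \<ge> b}"
    using assms(1) unfolding polyhedronQ_def by blast
  have "\<forall>(a,b)\<in>H. pairQ a ((1-l) *s p + l *s x) \<ge> b"
  proof clarify
    fix a b assume ab: "(a,b) \<in> H"
    then have "pairQ a p \<ge> b" "pairQ a x \<ge> b" using assms H by auto
    then have "(1-l)*b + l*b \<le> (1-l)*pairQ a p + l * pairQ a x"
      using assms by (intro add_mono mult_left_mono) auto
    moreover have "pairQ a ((1-l) *s p + l *s x) = (1-l)*pairQ a p + l * pairQ a x"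
      by (simp only: pairQ_add_right pairQ_scale_right)
    ultimately show "b \<le> pairQ a ((1-l) *s p + l *s x)"
      by (simp add: algebra_simps)
  qed
  then show ?thesis using H by simp
qed


declare transpose_matrix_vector[simp del]

theorem mainTheorem5:
  fixes A :: "int ^ 'm ^ 'n" \<comment> \<open>i : M = Z^m \<rightarrow> \<Lambda> = Z^n\<close>
    and D :: "int ^ 'n ^ 'k" \<comment> \<open>d : \<Lambda> \<rightarrow> B = Z^k\<close>
    and P F :: "(rat ^ 'n) set"
  assumes inj_i: "inj (\<lambda>x. A *v x)"
    and surj_d: "surj (\<lambda>x. D *v x)"
    and exact: "\<forall>x. D *v x = 0 \<longleftrightarrow> x \<in> range (\<lambda>z. A *v z)"
    and poly: "polyhedronQ P"
    and face: "is_faceQ F P"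
    and stable: "M_stable A F"
  shows "bij_betw (\<lambda>y. transpose (ratmat A) *v y)
           (normal_coneQ F P)
           (normal_coneQ {m. ratmat A *v m \<in> F} {m. ratmat A *v m \<in> P})"
proof -
  let ?B = "ratmat A"
  let ?L = "dir_spanQ F"
  let ?FM = "{m. ?B *v m \<in> F}"
  let ?PM = "{m. ?B *v m \<in> P}"
  from stable obtain x0 m0 where x0: "x0 \<in> rel_interiorQ F" "x0 = ?B *v m0"
    and dec: "\<forall>v. \<exists>a\<in>?L. \<exists>m. v = a + ?B *v m"
    unfolding M_stable_def by blast
  have x0F: "x0 \<in> F" using x0 rel_interiorQ_def by auto
  from face obtain yF where FyF: "F = faceQ yF P" unfolding is_faceQ_def by blast
  have FP: "F \<subseteq> P" using FyF faceQ_def by auto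
  have m0FM: "m0 \<in> ?FM" using x0 x0F by simp
  have Lsub: "vec.subspace ?L" unfolding dir_spanQ_def spanQ_eq by (rule vec.subspace_span)
  have diffL: "\<And>x x'. x \<in> F \<Longrightarrow> x' \<in> F \<Longrightarrow> x - x' \<in> ?L"
    unfolding dir_spanQ_def spanQ_eq by (rule vec.span_base) blast
  have into: "\<And>y. y \<in> normal_coneQ F P \<Longrightarrow> transpose ?B *v y \<in> normal_coneQ ?FM ?PM"
    unfolding normal_coneQ_def faceQ_def using FP by (auto simp: pairQ_transpose)
  have const: "\<And>y x x'. y \<in> normal_coneQ F P \<Longrightarrow> x \<in> F \<Longrightarrow> x' \<in> F \<Longrightarrow> pairQ x y = pairQ x' y"
  proof -
    fix y x x' assume y: "y \<in> normal_coneQ F P" and x: "x \<in> F" and x': "x' \<in> F"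
    then have "x \<in> faceQ y P" "x' \<in> faceQ y P" unfolding normal_coneQ_def by auto
    then show "pairQ x y = pairQ x' y" unfolding faceQ_def by (auto intro: antisym)
  qed
  have inj: "inj_on (\<lambda>y. transpose ?B *v y) (normal_coneQ F P)"
  proof (rule inj_onI)
    fix y1 y2 assume y1: "y1 \<in> normal_coneQ F P" and y2: "y2 \<in> normal_coneQ F P"
      and eq: "transpose ?B *v y1 = transpose ?B *v y2"
    define w where "w = y1 - y2"
    have Lw: "\<And>a. a \<in> ?L \<Longrightarrow> pairQ a w = 0"
    proof -
      fix a assume "a \<in> ?L"
      then have "a \<in> vec.span {x - y |x y. x \<in> F \<and> y \<in> F}" unfolding dir_spanQ_def spanQ_eq .
      moreover have "vec.span {x - y |x y. x \<in> F \<and> y \<in> F} \<subseteq> {a. pairQ a w = 0}"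
      proof (rule vec.span_minimal)
        show "{x - y |x y. x \<in> F \<and> y \<in> F} \<subseteq> {a. pairQ a w = 0}"
        proof clarify
          fix x x' assume xx: "x \<in> F" "x' \<in> F"
          have "pairQ x y1 = pairQ x' y1" using const[OF y1 xx] .
          moreover have "pairQ x y2 = pairQ x' y2" using const[OF y2 xx] .
          ultimately show "pairQ (x - x') w = 0" unfolding w_def
            by (simp only: pairQ_diff_left pairQ_diff_right)
        qed
        show "vec.subspace {a. pairQ a w = 0}"
          unfolding vec.subspace_def by (simp add: pairQ_add_left pairQ_scale_left)
      qed
      ultimately show "pairQ a w = 0" by blast
    qed
    have "pairQ w w = 0"
    proof -
      obtain a m where am: "a \<in> ?L" "w = a + ?B *v m" using dec by blast
      then have "pairQ w w = pairQ a w + pairQ m (transpose ?B *v w)"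
        by (simp add: pairQ_add_left pairQ_transpose)
      also have "transpose ?B *v w = 0" using eq by (simp add: w_def matrix_vector_mult_diff_distrib)
      finally show ?thesis using Lw am(1) by (simp add: pairQ_def)
    qed
    then have "w = 0" by (rule pairQ_self_zero)
    then show "y1 = y2" by (simp add: w_def)
  qed
  have surj: "normal_coneQ ?FM ?PM \<subseteq> (\<lambda>y. transpose ?B *v y) ` normal_coneQ F P"
  proof
    fix z assume z: "z \<in> normal_coneQ ?FM ?PM"
    have zmin: "\<And>m m'. m \<in> ?FM \<Longrightarrow> m' \<in> ?PM \<Longrightarrow> pairQ m z \<le> pairQ m' z"
      using z unfolding normal_coneQ_def faceQ_def by blast
    have FMPM: "\<And>m. m \<in> ?FM \<Longrightarrow> m \<in> ?PM" using FP by auto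
    have C: "\<And>w. ?B *v w \<in> ?L \<Longrightarrow> pairQ w z = 0"
    proof -
      fix w assume "?B *v w \<in> ?L"
      from R[OF x0(1) this] obtain s where s: "s>0" "x0 + s *s (?B *v w) \<in> F" by blast
      have "?B *v (m0 + s *s w) = x0 + s *s (?B *v w)"
        using x0(2) by (simp add: matrix_vector_right_distrib vector_scalar_commute)
      then have mF: "m0 + s *s w \<in> ?FM" using s by simp
      have "pairQ m0 z \<le> pairQ (m0 + s *s w) z" using zmin[OF m0FM FMPM[OF mF]] .
      moreover have "pairQ (m0 + s *s w) z \<le> pairQ m0 z" using zmin[OF mF FMPM[OF m0FM]] .
      ultimately have "s * pairQ w z = 0" by (simp add: pairQ_add_left pairQ_scale_left)
      then show "pairQ w z = 0" using s by simp
    qed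
    define f where "f v = pairQ (SOME m. \<exists>a\<in>?L. v = a + ?B *v m) z" for v
    have WD: "\<And>v a m. a \<in> ?L \<Longrightarrow> v = a + ?B *v m \<Longrightarrow> f v = pairQ m z"
    proof -
      fix v a m assume a: "a \<in> ?L" and v: "v = a + ?B *v m"
      define m' where "m' = (SOME m. \<exists>a\<in>?L. v = a + ?B *v m)"
      have "\<exists>m. \<exists>a\<in>?L. v = a + ?B *v m" using dec by blast
      from someI_ex[OF this] obtain a' where a': "a' \<in> ?L" "v = a' + ?B *v m'"
        unfolding m'_def by blast
      have "a + ?B *v m = a' + ?B *v m'" using a'(2) v by simp
      then have "?B *v (m - m') = a' - a"
        by (simp add: matrix_vector_mult_diff_distrib algebra_simps)
      moreover have "a' - a \<in> ?L" using Lsub a'(1) a by (rule vec.subspace_diff)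
      ultimately have "pairQ (m - m') z = 0" using C by simp
      then show "f v = pairQ m z" by (simp add: f_def m'_def[symmetric] pairQ_diff_left)
    qed
    have f_add: "\<And>u v. f (u + v) = f u + f v"
    proof -
      fix u v
      obtain a1 m1 where 1: "a1 \<in> ?L" "u = a1 + ?B *v m1" using dec by blast
      obtain a2 m2 where 2: "a2 \<in> ?L" "v = a2 + ?B *v m2" using dec by blast
      have "a1 + a2 \<in> ?L" using Lsub 1(1) 2(1) by (rule vec.subspace_add)
      moreover have "u + v = (a1 + a2) + ?B *v (m1 + m2)"
        using 1 2 by (simp add: matrix_vector_right_distrib algebra_simps)
      ultimately have "f (u + v) = pairQ (m1 + m2) z" by (rule WD)
      then show "f (u + v) = f u + f v" using WD[OF 1] WD[OF 2] by (simp add: pairQ_add_left)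
    qed
    have f_scale: "\<And>c v. f (c *s v) = c * f v"
    proof -
      fix c v
      obtain a1 m1 where 1: "a1 \<in> ?L" "v = a1 + ?B *v m1" using dec by blast
      have "c *s a1 \<in> ?L" using Lsub 1(1) by (rule vec.subspace_scale)
      moreover have "c *s v = c *s a1 + ?B *v (c *s m1)"
        using 1 by (simp add: vector_scalar_commute vec.scale_right_distrib)
      ultimately have "f (c *s v) = pairQ (c *s m1) z" by (rule WD)
      then show "f (c *s v) = c * f v" using WD[OF 1] by (simp add: pairQ_scale_left)
    qed
    have f0: "f 0 = 0" using WD[of 0 0 0] vec.subspace_0[OF Lsub] by (simp add: pairQ_def)
    have f_sum: "\<And>S g. finite S \<Longrightarrow> f (\<Sum>i\<in>S. g i) = (\<Sum>i\<in>S. f (g i))"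
    proof -
      fix S :: "'x set" and g assume "finite S"
      then show "f (\<Sum>i\<in>S. g i) = (\<Sum>i\<in>S. f (g i))"
        by (induction S rule: finite_induct) (simp_all add: f0 f_add)
    qed
    define y where "y = (\<chi> i. f (axis i 1))"
    have py: "\<And>v. pairQ v y = f v"
    proof -
      fix v
      have "f v = f (\<Sum>i\<in>UNIV. v$i *s axis i 1)" by (simp add: basis_expansion)
      also have "\<dots> = (\<Sum>i\<in>UNIV. v$i * f (axis i 1))" by (simp add: f_sum f_scale)
      also have "\<dots> = pairQ v y" by (simp add: pairQ_def y_def)
      finally show "pairQ v y = f v" by simp
    qed
    have Ty: "transpose ?B *v y = z"
    proof -
      have pm: "\<And>m. pairQ m (transpose ?B *v y) = pairQ m z"
      proof -
        fix m
        have "f (?B *v m) = pairQ m z" using WD[of 0 "?B *v m" m] vec.subspace_0[OF Lsub] by simp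
        then show "pairQ m (transpose ?B *v y) = pairQ m z" by (simp add: pairQ_transpose py)
      qed
      show ?thesis unfolding vec_eq_iff using pm[of "axis _ 1"] by (simp add: pairQ_axis)
    qed
    have yN: "y \<in> normal_coneQ F P"
      unfolding normal_coneQ_def faceQ_def
    proof (safe)
      fix x' assume "x' \<in> F" then show "x' \<in> P" using FP by blast
    next
      fix x' x assume x'F: "x' \<in> F" and xP: "x \<in> P"
      obtain a m where am: "a \<in> ?L" "x - x0 = a + ?B *v m" using dec by blast
      have "-a \<in> ?L" using Lsub am(1) by (rule vec.subspace_neg)
      from R[OF x0(1) this] obtain s where s: "s>0" "x0 + s *s (-a) \<in> F" by blast
      define l where "l = s/(1+s)"
      have l: "0 \<le> l" "l \<le> 1" using s by (auto simp: l_def)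
      have "(1-l) *s (x0 + s *s (-a)) + l *s x \<in> P" using conv[OF poly _ xP l] FP s(2) by blast
      moreover have "(1-l) *s (x0 + s *s (-a)) + l *s x = ?B *v (m0 + l *s m)"
      proof -
        have xx: "x = x0 + a + ?B *v m" using am(2) by (simp add: algebra_simps)
        have "(1-l) *s (x0 + s *s (-a)) + l *s x = x0 + l *s (?B *v m)"
        proof (unfold vec_eq_iff, rule allI)
          fix i
          have h: "(1-l) * s = l" using s(1) by (simp add: l_def field_simps)
          have "(1-l)*(x0$i + s*(-a$i)) + l*(x0$i + a$i + (?B *v m)$i)
              = x0$i - ((1-l) * s)*a$i + l*a$i + l*(?B *v m)$i"
            by (simp add: algebra_simps)
          also have "\<dots> = x0$i + l*(?B *v m)$i" unfolding h by simp
          finally show "((1-l) *s (x0 + s *s (-a)) + l *s x) $ i = (x0 + l *s (?B *v m)) $ i"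
            unfolding xx using h by simp
        qed
        then show ?thesis using x0(2)
          by (simp add: matrix_vector_right_distrib vector_scalar_commute)
      qed
      ultimately have "m0 + l *s m \<in> ?PM" by simp
      then have "pairQ m0 z \<le> pairQ (m0 + l *s m) z" using zmin[OF m0FM] by blast
      then have "l * pairQ m z \<ge> 0" by (simp add: pairQ_add_left pairQ_scale_left)
      moreover have "l > 0" using s by (simp add: l_def)
      ultimately have zm: "pairQ m z \<ge> 0" by (simp add: zero_le_mult_iff)
      have "x - x' = (a - (x' - x0)) + ?B *v m" using am(2) by (simp add: algebra_simps)
      moreover have "a - (x' - x0) \<in> ?L" using Lsub am(1) diffL[OF x'F x0F] by (rule vec.subspace_diff)
      ultimately have "f (x - x') = pairQ m z" using WD by blast
      then have "pairQ (x - x') y \<ge> 0" using py zm by simp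
      then show "pairQ x' y \<le> pairQ x y" by (simp add: pairQ_diff_left)
    qed
    show "z \<in> (\<lambda>y. transpose ?B *v y) ` normal_coneQ F P" using Ty yN by blast
  qed
  show ?thesis unfolding bij_betw_def using inj into surj by blast
qed

end
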